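(* Let $2\le k\le d+1$ and let $\mathcal{Q}=\{Q_1,\dots,Q_k\}$ be a collection of cubes in $\mathbb{R}^d$ that is transversal. Then each $Q_l$ can be partitioned into finitely many (a number bounded independently of anything but the collection) sub-cubes $Q_l=\bigcup_i Q_{l,i}$ such that every collection $\widetilde{\mathcal{Q}}=\{\widetilde Q_1,\dots,\widetilde Q_k\}$ with $\widetilde Q_l\in\{Q_{l,i}\}_i$ for each $l$ is weakly transversal.
   Context: "Cube" means any rectangular box in $\mathbb{R}^d$ (sides need not be equal). A collection of cubes $Q_1,\dots,Q_k$ is transversal if the caps $S_j=\{(\xi,|\xi|^2):\xi\in Q_j\}$ of the paraboloid are transversal: there is $c>0$ with $|v_1\wedge\dots\wedge v_k|\ge c$ for all choices of unit normal vectors $v_j$ to $S_j$. Let $\pi_l$ denote the projection onto the $l$-th coordinate axis $e_l$. A collection $\{Q_1,\dots,Q_k\}$ is weakly transversal with pivot $Q_j$ if there are $k-1$ distinct indices $i_1,\dots,i_{k-1}$ and an enumeration $l_1,\dots,l_{k-1}$ of $\{1,\dots,k\}\setminus\{j\}$ such that $\overline{\pi_{i_s}(Q_j)}\cap\overline{\pi_{i_s}(Q_{l_s})}=\emptyset$ for $s=1,\dots,k-1$. The collection is weakly transversal if it is weakly transversal with pivot $Q_j$ for every $1\le j\le k$. *)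

theory Defs
  imports "HOL-Analysis.Analysis"
begin

text \<open>A "cube": a nondegenerate closed rectangular box in R^d (sides need not be equal).\<close>
definition is_cube :: "(real^'d) set \<Rightarrow> bool" where
  "is_cube Q \<longleftrightarrow> (\<exists>a b. (\<forall>i. a$i < b$i) \<and> Q = cbox a b)"

definition cube_partition :: "(real^'d) set set \<Rightarrow> (real^'d) set \<Rightarrow> bool" where
  "cube_partition P Q \<longleftrightarrow> finite P \<and> (\<forall>R\<in>P. is_cube R) \<and> \<Union>P = Q \<and>
     (\<forall>R1\<in>P. \<forall>R2\<in>P. R1 \<noteq> R2 \<longrightarrow> interior R1 \<inter> interior R2 = {})"

text \<open>R^{d+1} is modelled as real^'d \<times> real. The paraboloid point over xi is (xi, |xi|^2);
  its tangent space is {(h, 2 xi.h)}. A unit normal is a unit vector orthogonal to it.\<close>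
definition unit_normal_paraboloid :: "(real^'d) \<Rightarrow> ((real^'d) \<times> real) \<Rightarrow> bool" where
  "unit_normal_paraboloid xi v \<longleftrightarrow> norm v = 1 \<and> (\<forall>h. v \<bullet> (h, 2 * (xi \<bullet> h)) = 0)"

definition wedge_norm :: "('k::finite \<Rightarrow> 'v::real_inner) \<Rightarrow> real" where
  "wedge_norm v = sqrt (det (\<chi> i j. v i \<bullet> v j))"

definition transversal :: "('k::finite \<Rightarrow> (real^'d) set) \<Rightarrow> bool" where
  "transversal Q \<longleftrightarrow> (\<exists>c>0. \<forall>xi v. (\<forall>j. xi j \<in> Q j \<and> unit_normal_paraboloid (xi j) (v j))
      \<longrightarrow> wedge_norm v \<ge> c)"

definition coord_proj :: "'d \<Rightarrow> (real^'d) set \<Rightarrow> real set" where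
  "coord_proj i Q = (\<lambda>x. x $ i) ` Q"

definition weakly_transversal_pivot :: "('k::finite \<Rightarrow> (real^'d) set) \<Rightarrow> 'k \<Rightarrow> bool" where
  "weakly_transversal_pivot Q j \<longleftrightarrow> (\<exists>\<sigma>::'k \<Rightarrow> 'd. inj_on \<sigma> (UNIV - {j}) \<and>
     (\<forall>l. l \<noteq> j \<longrightarrow> closure (coord_proj (\<sigma> l) (Q j)) \<inter> closure (coord_proj (\<sigma> l) (Q l)) = {}))"

definition weakly_transversal :: "('k::finite \<Rightarrow> (real^'d) set) \<Rightarrow> bool" where
  "weakly_transversal Q \<longleftrightarrow> (\<forall>j. weakly_transversal_pivot Q j)"

end

theory Submission
  imports Defs
begin


definition indep_fam :: "'k set \<Rightarrow> ('k \<Rightarrow> real^'d) \<Rightarrow> bool" where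
  "indep_fam S w \<longleftrightarrow> (\<forall>c. (\<Sum>l\<in>S. c l *\<^sub>R w l) = 0 \<longrightarrow> (\<forall>l\<in>S. c l = 0))"

lemma indep_fam_insert:
  assumes "indep_fam (insert a S) w" "a \<notin> S" "finite S"
  shows "indep_fam S w"
  unfolding indep_fam_def
proof (intro allI impI ballI)
  fix c l assume h: "(\<Sum>l\<in>S. c l *\<^sub>R w l) = 0" and l: "l \<in> S"
  let ?c = "c(a := 0)"
  have "(\<Sum>l\<in>insert a S. ?c l *\<^sub>R w l) = (\<Sum>l\<in>S. ?c l *\<^sub>R w l)"
    using assms by simp
  also have "\<dots> = (\<Sum>l\<in>S. c l *\<^sub>R w l)"
    using assms(2) by (intro sum.cong) auto
  finally have "(\<Sum>l\<in>insert a S. ?c l *\<^sub>R w l) = 0" using h by simp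
  then have "?c l = 0" using spec[OF assms(1)[unfolded indep_fam_def], of ?c] l by blast
  then show "c l = 0" using l assms(2) by (auto split: if_splits)
qed

lemma match_lemma:
  fixes w :: "'k \<Rightarrow> real^'d"
  assumes "finite S" "indep_fam S w"
  shows "\<exists>\<sigma>. inj_on \<sigma> S \<and> (\<forall>l\<in>S. w l $ \<sigma> l \<noteq> 0)"
  using assms
proof (induction S arbitrary: w rule: finite_induct)
  case empty
  then show ?case by auto
next
  case (insert a S)
  have indS: "indep_fam S w" by (rule indep_fam_insert[OF insert.prems insert.hyps(2,1)])
  define w' where "w' i = (\<lambda>l. w l - (w l $ i) *\<^sub>R axis i 1)" for i
  have "\<exists>i. w a $ i \<noteq> 0 \<and> indep_fam S (w' i)"
  proof (rule ccontr)
    assume nex: "\<not> ?thesis"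
    define V where "V = {x. \<exists>d. x = (\<Sum>l\<in>S. d l *\<^sub>R w l)}"
    have subV: "subspace V"
      unfolding subspace_def V_def
    proof (intro conjI allI ballI)
      show "0 \<in> {x. \<exists>d. x = (\<Sum>l\<in>S. d l *\<^sub>R w l)}"
        by (rule CollectI, rule exI[of _ "\<lambda>_. 0"]) simp
    next
      fix x y assume "x \<in> {x. \<exists>d. x = (\<Sum>l\<in>S. d l *\<^sub>R w l)}" "y \<in> {x. \<exists>d. x = (\<Sum>l\<in>S. d l *\<^sub>R w l)}"
      then obtain d1 d2 where "x = (\<Sum>l\<in>S. d1 l *\<^sub>R w l)" "y = (\<Sum>l\<in>S. d2 l *\<^sub>R w l)" by auto
      then have "x + y = (\<Sum>l\<in>S. (d1 l + d2 l) *\<^sub>R w l)"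
        by (simp add: sum.distrib scaleR_add_left)
      then show "x + y \<in> {x. \<exists>d. x = (\<Sum>l\<in>S. d l *\<^sub>R w l)}" by (intro CollectI exI[of _ "\<lambda>l. d1 l + d2 l"])
    next
      fix c x assume "x \<in> {x. \<exists>d. x = (\<Sum>l\<in>S. d l *\<^sub>R w l)}"
      then obtain d1 where "x = (\<Sum>l\<in>S. d1 l *\<^sub>R w l)" by auto
      then have "c *\<^sub>R x = (\<Sum>l\<in>S. (c * d1 l) *\<^sub>R w l)"
        by (simp add: scaleR_sum_right)
      then show "c *\<^sub>R x \<in> {x. \<exists>d. x = (\<Sum>l\<in>S. d l *\<^sub>R w l)}" by (intro CollectI exI[of _ "\<lambda>l. c * d1 l"])
    qed
    have ax: "axis i 1 \<in> V" if wi: "w a $ i \<noteq> 0" for i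
    proof -
      from nex wi have "\<not> indep_fam S (w' i)" by blast
      then obtain c l0 where c: "(\<Sum>l\<in>S. c l *\<^sub>R w' i l) = 0" and l0: "l0 \<in> S" "c l0 \<noteq> 0"
        unfolding indep_fam_def by blast
      define lam where "lam = (\<Sum>l\<in>S. c l * (w l $ i))"
      have "(\<Sum>l\<in>S. c l *\<^sub>R w' i l) = (\<Sum>l\<in>S. c l *\<^sub>R w l) - lam *\<^sub>R axis i 1"
        unfolding w'_def lam_def by (simp add: scaleR_diff_right sum_subtractf scaleR_sum_left)
      then have eq: "(\<Sum>l\<in>S. c l *\<^sub>R w l) = lam *\<^sub>R axis i 1" using c by simp
      have "lam \<noteq> 0"
      proof
        assume "lam = 0"
        then have "(\<Sum>l\<in>S. c l *\<^sub>R w l) = 0" using eq by simp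
        then show False using indS l0 unfolding indep_fam_def by blast
      qed
      then have "axis i 1 = (\<Sum>l\<in>S. (c l / lam) *\<^sub>R w l)"
      proof -
        have "(1/lam) *\<^sub>R (\<Sum>l\<in>S. c l *\<^sub>R w l) = (\<Sum>l\<in>S. (c l / lam) *\<^sub>R w l)"
          by (simp add: scaleR_sum_right)
        then show ?thesis using eq \<open>lam \<noteq> 0\<close> by simp
      qed
      then show ?thesis unfolding V_def by (intro CollectI exI[of _ "\<lambda>l. c l / lam"])
    qed
    have "(\<Sum>i\<in>UNIV. w a $ i *s axis i 1) \<in> V"
    proof (rule subspace_sum[OF subV])
      fix i show "w a $ i *s axis i 1 \<in> V"
      proof (cases "w a $ i = 0")
        case True then show ?thesis using subspace_0[OF subV] by simp
      next
        case False then show ?thesis using subspace_mul[OF subV ax[OF False]] by (simp add: scalar_mult_eq_scaleR)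
      qed
    qed
    then have "w a \<in> V" by (simp add: basis_expansion)
    then obtain d where d: "w a = (\<Sum>l\<in>S. d l *\<^sub>R w l)" unfolding V_def by blast
    define c where "c = (d(a := -1))"
    have "(\<Sum>l\<in>insert a S. c l *\<^sub>R w l) = - w a + (\<Sum>l\<in>S. c l *\<^sub>R w l)"
      using insert.hyps by (simp add: c_def)
    also have "(\<Sum>l\<in>S. c l *\<^sub>R w l) = (\<Sum>l\<in>S. d l *\<^sub>R w l)"
      using insert.hyps by (intro sum.cong) (auto simp: c_def)
    finally have "(\<Sum>l\<in>insert a S. c l *\<^sub>R w l) = 0" using d by simp
    then have "c a = 0" using spec[OF insert.prems[unfolded indep_fam_def], of c] by blast
    then show False by (simp add: c_def)
  qed
  then obtain i where i: "w a $ i \<noteq> 0" "indep_fam S (w' i)" by blast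
  from insert.IH[OF i(2)] obtain \<sigma> where s: "inj_on \<sigma> S" "\<forall>l\<in>S. w' i l $ \<sigma> l \<noteq> 0" by blast
  have si: "\<sigma> l \<noteq> i" "w l $ \<sigma> l \<noteq> 0" if "l \<in> S" for l
    using s(2) that unfolding w'_def by (auto simp: axis_def split: if_splits)
  show ?case
    apply (rule exI[of _ "\<sigma>(a := i)"])
    using s si i insert.hyps by (auto simp: inj_on_def split: if_splits)
qed



lemma grid1:
  fixes a x L :: real and N :: nat
  assumes "L > 0" "N > 0" "a \<le> x" "x \<le> a + L"
  shows "\<exists>m<N. a + L * real m / real N \<le> x \<and> x \<le> a + L * (real m + 1) / real N"
proof -
  define t where "t = (x - a) * real N / L"
  have q: "0 \<le> (x-a)/L" "(x-a)/L \<le> 1" using assms by auto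
  have teq: "t = real N * ((x-a)/L)" unfolding t_def by simp
  have t0: "0 \<le> t" by (simp only: teq) (rule mult_nonneg_nonneg, simp, rule q(1))
  have tN: "t \<le> real N" by (simp only: teq) (rule mult_left_le[OF q(2)], simp)
  have xt: "x = a + L * t / real N" using assms unfolding t_def by (simp add: field_simps)
  define m where "m = min (N - 1) (nat \<lfloor>t\<rfloor>)"
  have mN: "m < N" using assms unfolding m_def by auto
  have fl: "real (nat \<lfloor>t\<rfloor>) \<le> t" using t0 by simp
  have "m \<le> nat \<lfloor>t\<rfloor>" unfolding m_def by simp
  then have m1: "real m \<le> t" using fl by linarith
  have m2: "t \<le> real m + 1"
  proof (cases "nat \<lfloor>t\<rfloor> \<le> N - 1")
    case True then have "m = nat \<lfloor>t\<rfloor>" unfolding m_def by simp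
    then show ?thesis using t0 by linarith
  next
    case False then have "m = N - 1" unfolding m_def by simp
    then show ?thesis using tN assms(2) by (simp add: of_nat_diff)
  qed
  have "a + L * real m / real N \<le> a + L * t / real N"
    using m1 assms by (simp add: divide_right_mono)
  moreover have "a + L * t / real N \<le> a + L * (real m + 1) / real N"
    using m2 assms by (simp add: divide_right_mono)
  ultimately show ?thesis using mN xt by auto
qed

lemma grid:
  fixes Q :: "(real^'d) set"
  assumes "is_cube Q" "h > 0"
  shows "\<exists>P. cube_partition P Q \<and> (\<forall>R\<in>P. \<forall>x\<in>R. \<forall>y\<in>R. \<forall>i. \<bar>x$i - y$i\<bar> \<le> h)"
proof -
  obtain a b where ab: "\<forall>i. a$i < b$i" "Q = cbox a b" using assms(1) unfolding is_cube_def by blast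
  define L where "L = b - a"
  have Lpos: "L$i > 0" for i using ab unfolding L_def by simp
  define N where "N = nat \<lceil>(\<Sum>i\<in>UNIV. L$i) / h\<rceil> + 1"
  have Npos: "N > 0" unfolding N_def by simp
  have LN: "L$i / real N \<le> h" for i
  proof -
    have "L$i \<le> (\<Sum>i\<in>UNIV. L$i)"
      using Lpos by (intro member_le_sum) (auto intro: less_imp_le)
    also have "\<dots> \<le> h * real N"
    proof -
      have "(\<Sum>i\<in>UNIV. L$i) / h \<le> real N" unfolding N_def by linarith
      then show ?thesis using assms(2) by (simp add: divide_le_eq mult.commute)
    qed
    finally show ?thesis using Npos by (simp add: divide_le_eq mult.commute)
  qed
  define lo where "lo m = (\<chi> i. a$i + L$i * real (m i) / real N)" for m :: "'d \<Rightarrow> nat"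
  define hi where "hi m = (\<chi> i. a$i + L$i * (real (m i) + 1) / real N)" for m :: "'d \<Rightarrow> nat"
  define M where "M = {m :: 'd \<Rightarrow> nat. \<forall>i. m i < N}"
  define P where "P = (\<lambda>m. cbox (lo m) (hi m)) ` M"
  have finM: "finite M"
  proof -
    have "M = Pi\<^sub>E UNIV (\<lambda>_. {..<N})" unfolding M_def by (auto simp: PiE_UNIV_domain Pi_def)
    then show ?thesis by (simp add: finite_PiE)
  qed
  have lohi: "lo m $ i < hi m $ i" for m i
    unfolding lo_def hi_def using Lpos[of i] Npos by (simp add: divide_strict_right_mono)
  have cubes: "\<forall>R\<in>P. is_cube R" unfolding P_def is_cube_def using lohi by blast
  have sub: "cbox (lo m) (hi m) \<subseteq> cbox a b" if "m \<in> M" for m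
  proof -
    have bnd: "a$i \<le> lo m $ i \<and> hi m $ i \<le> b$i" for i
    proof -
      have "m i + 1 \<le> N" using that unfolding M_def by (simp add: Suc_le_eq)
      then have "real (m i) + 1 \<le> real N" by linarith
      then have "L$i * (real (m i) + 1) / real N \<le> L$i"
        using Lpos[of i] Npos by (simp add: divide_le_eq mult_left_mono)
      moreover have "0 \<le> L$i * real (m i) / real N" using Lpos[of i] by simp
      ultimately show ?thesis unfolding lo_def hi_def L_def by simp
    qed
    show ?thesis unfolding subset_eq
    proof (intro ballI)
      fix y assume "y \<in> cbox (lo m) (hi m)"
      then have "lo m $ i \<le> y $ i \<and> y $ i \<le> hi m $ i" for i by (simp add: mem_box_cart)
      then show "y \<in> cbox a b" using bnd by (simp add: mem_box_cart) (meson order_trans)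
    qed
  qed
  have cover: "cbox a b \<subseteq> \<Union>P"
  proof
    fix x assume x: "x \<in> cbox a b"
    have "\<forall>i. \<exists>m<N. a$i + L$i * real m / real N \<le> x$i \<and> x$i \<le> a$i + L$i * (real m + 1) / real N"
    proof
      fix i
      have "a$i \<le> x$i" "x$i \<le> a$i + L$i" using x unfolding L_def by (auto simp: mem_box_cart)
      then show "\<exists>m<N. a$i + L$i * real m / real N \<le> x$i \<and> x$i \<le> a$i + L$i * (real m + 1) / real N"
        using grid1[OF Lpos Npos] by blast
    qed
    then obtain m where m: "\<forall>i. m i < N \<and> a$i + L$i * real (m i) / real N \<le> x$i \<and> x$i \<le> a$i + L$i * (real (m i) + 1) / real N"
      by metis
    then have "m \<in> M" "x \<in> cbox (lo m) (hi m)" unfolding M_def lo_def hi_def by (auto simp: mem_box_cart)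
    then show "x \<in> \<Union>P" unfolding P_def by blast
  qed
  have union: "\<Union>P = Q" using sub cover ab(2) unfolding P_def by blast
  have disj: "interior R1 \<inter> interior R2 = {}" if R12: "R1 \<in> P" "R2 \<in> P" "R1 \<noteq> R2" for R1 R2
  proof -
    obtain m1 m2 where R: "R1 = cbox (lo m1) (hi m1)" "R2 = cbox (lo m2) (hi m2)"
      using R12 unfolding P_def by blast
    then have "m1 \<noteq> m2" using R12 by blast
    then obtain i where "m1 i \<noteq> m2 i" by blast
    then have "m1 i + 1 \<le> m2 i \<or> m2 i + 1 \<le> m1 i" by linarith
    then have "hi m1 $ i \<le> lo m2 $ i \<or> hi m2 $ i \<le> lo m1 $ i"
    proof
      assume "m1 i + 1 \<le> m2 i"
      then have "real (m1 i) + 1 \<le> real (m2 i)" by linarith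
      then have "L$i * (real (m1 i) + 1) / real N \<le> L$i * real (m2 i) / real N"
        using Lpos[of i] Npos by (simp add: divide_right_mono mult_left_mono)
      then show ?thesis unfolding lo_def hi_def by simp
    next
      assume "m2 i + 1 \<le> m1 i"
      then have "real (m2 i) + 1 \<le> real (m1 i)" by linarith
      then have "L$i * (real (m2 i) + 1) / real N \<le> L$i * real (m1 i) / real N"
        using Lpos[of i] Npos by (simp add: divide_right_mono mult_left_mono)
      then show ?thesis unfolding lo_def hi_def by simp
    qed
    then show ?thesis unfolding R interior_cbox
      by (auto simp: mem_box_cart) (smt (verit))+
  qed
  have diam: "\<forall>R\<in>P. \<forall>x\<in>R. \<forall>y\<in>R. \<forall>i. \<bar>x$i - y$i\<bar> \<le> h"
  proof (intro ballI allI)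
    fix R x y i assume "R \<in> P" "x \<in> R" "y \<in> R"
    then obtain m where "x \<in> cbox (lo m) (hi m)" "y \<in> cbox (lo m) (hi m)" unfolding P_def by blast
    then have "lo m $ i \<le> x$i" "x$i \<le> hi m $ i" "lo m $ i \<le> y$i" "y$i \<le> hi m $ i"
      by (auto simp: mem_box_cart)
    moreover have "hi m $ i - lo m $ i = L$i / real N"
      unfolding lo_def hi_def by (simp add: distrib_left add_divide_distrib)
    ultimately show "\<bar>x$i - y$i\<bar> \<le> h" using LN[of i] by linarith
  qed
  show ?thesis
    apply (rule exI[of _ P])
    unfolding cube_partition_def using finM cubes union disj diam unfolding P_def by blast
qed

lemma gram_inj:
  fixes v :: "'k::finite \<Rightarrow> 'v::real_inner"
  assumes "det (\<chi> i j. v i \<bullet> v j) \<noteq> 0" "(\<Sum>l\<in>UNIV. a l *\<^sub>R v l) = 0"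
  shows "a l = 0"
proof -
  define G where "G = (\<chi> i j. v i \<bullet> v j)"
  define x where "x = (\<chi> l. a l)"
  have "G *v x = 0"
  proof -
    have "(G *v x) $ i = v i \<bullet> (\<Sum>l\<in>UNIV. a l *\<^sub>R v l)" for i
      unfolding G_def x_def matrix_vector_mult_def by (simp add: inner_sum_right mult.commute)
    then show ?thesis using assms(2) by (simp add: vec_eq_iff)
  qed
  moreover have "invertible G" using assms(1) unfolding G_def by (simp add: invertible_det_nz)
  then obtain G' where "G' ** G = mat 1" unfolding invertible_def by blast
  ultimately have "x = 0"
    by (metis matrix_vector_mul_assoc matrix_vector_mul_lid matrix_vector_mult_0_right)
  then show ?thesis unfolding x_def by (simp add: vec_eq_iff)
qed

lemma transversal_indep:
  fixes Q :: "'k::finite \<Rightarrow> (real^'d) set"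
  assumes "transversal Q" "\<forall>l. p l \<in> Q l"
  shows "indep_fam (UNIV - {j}) (\<lambda>l. p l - p j)"
proof -
  obtain c where c: "c > 0" "\<And>xi v. (\<forall>j. xi j \<in> Q j \<and> unit_normal_paraboloid (xi j) (v j)) \<Longrightarrow> wedge_norm v \<ge> c"
    using assms(1) unfolding transversal_def by blast
  define s where "s l = sqrt (1 + 4 * (norm (p l))^2)" for l
  have spos: "s l > 0" for l unfolding s_def by (simp add: add_pos_nonneg)
  have s2: "(s l)^2 = 1 + 4 * (norm (p l))^2" for l unfolding s_def by (simp add: add_nonneg_nonneg)
  define t where "t l = 1 / s l" for l
  have tpos: "t l > 0" for l unfolding t_def using spos by simp
  define v where "v l = (- (2 * t l) *\<^sub>R p l, t l)" for l
  have un: "unit_normal_paraboloid (p l) (v l)" for l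
  proof -
    have "norm (v l) = sqrt ((2 * t l)^2 * (norm (p l))^2 + (t l)^2)"
      unfolding v_def norm_Pair by (simp add: power_mult_distrib)
    also have "(2 * t l)^2 * (norm (p l))^2 + (t l)^2 = (t l)^2 * (s l)^2"
      unfolding s2 by (simp add: algebra_simps)
    also have "\<dots> = 1" unfolding t_def using spos[of l] by (simp add: power_divide)
    finally have nv: "norm (v l) = 1" by simp
    have "v l \<bullet> (h, 2 * (p l \<bullet> h)) = 0" for h
      unfolding v_def by (simp add: algebra_simps)
    then show ?thesis unfolding unit_normal_paraboloid_def using nv by blast
  qed
  have "wedge_norm v \<ge> c" using c(2)[of p v] assms(2) un by blast
  then have "sqrt (det (\<chi> i j. v i \<bullet> v j)) > 0" using c(1) unfolding wedge_norm_def by linarith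
  then have detnz: "det (\<chi> i j. v i \<bullet> v j) \<noteq> 0" by (simp add: real_sqrt_gt_0_iff)
  show ?thesis unfolding indep_fam_def
  proof (intro allI impI ballI)
    fix cc l assume h: "(\<Sum>l\<in>UNIV - {j}. cc l *\<^sub>R (p l - p j)) = 0" and l: "l \<in> UNIV - {j}"
    define S where "S = UNIV - {j}"
    define \<Sigma> where "\<Sigma> = (\<Sum>l\<in>S. cc l)"
    define a where "a l = (if l = j then - \<Sigma> / t j else cc l / t l)" for l
    have hS: "(\<Sum>l\<in>S. cc l *\<^sub>R p l) = \<Sigma> *\<^sub>R p j"
      using h unfolding S_def \<Sigma>_def by (simp add: scaleR_diff_right sum_subtractf scaleR_sum_left)
    have aj: "a j *\<^sub>R v j = ((2 * \<Sigma>) *\<^sub>R p j, - \<Sigma>)"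
      unfolding a_def v_def using tpos[of j] by simp
    have al: "a l *\<^sub>R v l = (- (2 * cc l) *\<^sub>R p l, cc l)" if "l \<in> S" for l
      unfolding a_def v_def using tpos[of l] that unfolding S_def by simp
    have "(\<Sum>l\<in>UNIV. a l *\<^sub>R v l) = a j *\<^sub>R v j + (\<Sum>l\<in>S. a l *\<^sub>R v l)"
      unfolding S_def by (simp add: sum.remove)
    also have "(\<Sum>l\<in>S. a l *\<^sub>R v l) = (\<Sum>l\<in>S. (- (2 * cc l) *\<^sub>R p l, cc l))"
      using al by (rule sum.cong[OF refl])
    also have "\<dots> = (- 2 *\<^sub>R (\<Sum>l\<in>S. cc l *\<^sub>R p l), \<Sigma>)"
      unfolding \<Sigma>_def by (simp add: prod_eq_iff fst_sum snd_sum scaleR_sum_right)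
    finally have "(\<Sum>l\<in>UNIV. a l *\<^sub>R v l) = 0" using aj hS by (simp add: zero_prod_def)
    then have "a l = 0" using gram_inj[OF detnz] by blast
    then show "cc l = 0" using l tpos[of l] unfolding a_def by (simp split: if_splits)
  qed
qed

definition good :: "real \<Rightarrow> (real^'d)^'k \<Rightarrow> bool" where
  "good e x \<longleftrightarrow> (\<forall>j. \<exists>\<sigma>. inj_on \<sigma> (UNIV - {j}) \<and> (\<forall>l\<in>UNIV - {j}. e < \<bar>x$l$\<sigma> l - x$j$\<sigma> l\<bar>))"

lemma open_good: "open {x :: (real^'d)^'k::finite. good e x}"
proof -
  have "{x :: (real^'d)^'k. good e x} = (\<Inter>j\<in>UNIV. \<Union>\<sigma>\<in>{\<sigma>. inj_on \<sigma> (UNIV - {j})}.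
          \<Inter>l\<in>UNIV - {j}. {x. e < \<bar>x$l$\<sigma> l - x$j$\<sigma> l\<bar>})"
    unfolding good_def by auto
  moreover have "open {x :: (real^'d)^'k. e < \<bar>x$l$i - x$j$i\<bar>}" for l j i
    by (rule open_Collect_less) (intro continuous_intros)+
  ultimately show ?thesis by (auto intro!: open_INT open_UN)
qed

lemma good_mono: assumes "good e x" "e' \<le> e" shows "good e' x"
  unfolding good_def
proof
  fix j
  obtain \<sigma> where s: "inj_on \<sigma> (UNIV - {j})" "\<forall>l\<in>UNIV - {j}. e < \<bar>x$l$\<sigma> l - x$j$\<sigma> l\<bar>"
    using assms(1) unfolding good_def by blast
  show "\<exists>\<sigma>. inj_on \<sigma> (UNIV - {j}) \<and> (\<forall>l\<in>UNIV - {j}. e' < \<bar>x$l$\<sigma> l - x$j$\<sigma> l\<bar>)"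
  proof (intro exI[of _ \<sigma>] conjI ballI)
    show "inj_on \<sigma> (UNIV - {j})" by (rule s(1))
    fix l assume l: "l \<in> UNIV - {j}"
    have "e < \<bar>x$l$\<sigma> l - x$j$\<sigma> l\<bar>" using s(2) l by blast
    then show "e' < \<bar>x$l$\<sigma> l - x$j$\<sigma> l\<bar>" using assms(2) by linarith
  qed
qed

lemma pos_min:
  fixes f :: "'a \<Rightarrow> real"
  assumes "finite A" "\<forall>a\<in>A. 0 < f a"
  shows "\<exists>e>0. \<forall>a\<in>A. e < f a"
  using assms
proof (induction A rule: finite_induct)
  case empty then show ?case by (auto intro: exI[of _ 1])
next
  case (insert b A)
  then obtain e where e: "e > 0" "\<forall>a\<in>A. e < f a" by auto
  have "f b > 0" using insert by auto
  then show ?case using e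
    by (intro exI[of _ "min e (f b / 2)"]) auto
qed



lemma compact_K:
  fixes Q :: "'k::finite \<Rightarrow> (real^'d) set"
  assumes "\<forall>l. is_cube (Q l)"
  shows "compact {x :: (real^'d)^'k. \<forall>l. x$l \<in> Q l}"
proof -
  have cl: "closed (Q l)" for l
    using assms unfolding is_cube_def by (metis closed_cbox)
  have bd: "bounded (Q l)" for l
    using assms unfolding is_cube_def by (metis bounded_cbox)
  have "closed {x :: (real^'d)^'k. \<forall>l. x$l \<in> Q l}" by (rule closed_vector_box) (simp add: cl)
  moreover have "bounded {x :: (real^'d)^'k. \<forall>l. x$l \<in> Q l}"
  proof -
    have "\<forall>l. \<exists>B. \<forall>y\<in>Q l. norm y \<le> B" using bd unfolding bounded_iff by blast
    then obtain B where B: "\<And>l y. y \<in> Q l \<Longrightarrow> norm y \<le> B l" by metis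
    have "norm x \<le> (\<Sum>l\<in>UNIV. B l)" if "\<forall>l. x$l \<in> Q l" for x :: "(real^'d)^'k"
    proof -
      have "norm x = L2_set (\<lambda>l. norm (x$l)) UNIV" by (simp add: norm_vec_def)
      also have "\<dots> \<le> (\<Sum>l\<in>UNIV. norm (x$l))" by (rule L2_set_le_sum) simp
      also have "\<dots> \<le> (\<Sum>l\<in>UNIV. B l)" using B that by (intro sum_mono) blast
      finally show ?thesis .
    qed
    then show ?thesis unfolding bounded_iff by blast
  qed
  ultimately show ?thesis by (simp add: compact_eq_bounded_closed)
qed

lemma uniform_good:
  fixes Q :: "'k::finite \<Rightarrow> (real^'d) set"
  assumes "\<forall>l. is_cube (Q l)" "transversal Q"
  shows "\<exists>\<delta>>0. \<forall>x :: (real^'d)^'k. (\<forall>l. x$l \<in> Q l) \<longrightarrow> good \<delta> x"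
proof -
  define K where "K = {x :: (real^'d)^'k. \<forall>l. x$l \<in> Q l}"
  have cK: "compact K" unfolding K_def by (rule compact_K[OF assms(1)])
  have cov: "K \<subseteq> \<Union> ((\<lambda>n. {x. good (inverse (real (Suc n))) x}) ` UNIV)"
  proof
    fix x assume "x \<in> K"
    then have px: "\<forall>l. x$l \<in> Q l" unfolding K_def by blast
    have "\<forall>j. \<exists>\<sigma>. inj_on \<sigma> (UNIV - {j}) \<and> (\<forall>l\<in>UNIV - {j}. (x$l - x$j) $ \<sigma> l \<noteq> 0)"
    proof
      fix j
      show "\<exists>\<sigma>. inj_on \<sigma> (UNIV - {j}) \<and> (\<forall>l\<in>UNIV - {j}. (x$l - x$j) $ \<sigma> l \<noteq> 0)"
        using match_lemma[OF _ transversal_indep[OF assms(2), of "\<lambda>l. x$l"]] px by simp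
    qed
    then obtain \<sigma> where s: "\<And>j. inj_on (\<sigma> j) (UNIV - {j})"
      "\<And>j l. l \<in> UNIV - {j} \<Longrightarrow> (x$l - x$j) $ \<sigma> j l \<noteq> 0" by metis
    define f where "f = (\<lambda>(j,l). \<bar>x$l$\<sigma> j l - x$j$\<sigma> j l\<bar>)"
    have "\<forall>a\<in>{(j,l). l \<noteq> j}. 0 < f a" using s(2) unfolding f_def by auto
    then obtain e where e: "e > 0" "\<forall>a\<in>{(j,l). l \<noteq> j}. e < f a"
      using pos_min[of "{(j,l). l \<noteq> j}" f] by auto
    obtain n where n: "inverse (real (Suc n)) < e" using reals_Archimedean[OF e(1)] by blast
    have "good (inverse (real (Suc n))) x" unfolding good_def
    proof
      fix j
      show "\<exists>\<sigma>'. inj_on \<sigma>' (UNIV - {j}) \<and> (\<forall>l\<in>UNIV - {j}. inverse (real (Suc n)) < \<bar>x$l$\<sigma>' l - x$j$\<sigma>' l\<bar>)"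
      proof (intro exI[of _ "\<sigma> j"] conjI ballI)
        show "inj_on (\<sigma> j) (UNIV - {j})" by (rule s(1))
        fix l assume "l \<in> UNIV - {j}"
        then have "e < f (j,l)" using e(2) by auto
        then show "inverse (real (Suc n)) < \<bar>x$l$\<sigma> j l - x$j$\<sigma> j l\<bar>" using n unfolding f_def by simp
      qed
    qed
    then show "x \<in> \<Union> ((\<lambda>n. {x. good (inverse (real (Suc n))) x}) ` UNIV)" by blast
  qed
  obtain C where C: "finite C" "K \<subseteq> \<Union> ((\<lambda>n. {x. good (inverse (real (Suc n))) x}) ` C)"
    using compactE_image[OF cK _ cov] open_good by (metis subset_UNIV)
  define n0 where "n0 = Max (insert 0 C)"
  have "good (inverse (real (Suc n0))) x" if xK: "x \<in> K" for x
  proof -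
    obtain n where n: "n \<in> C" "good (inverse (real (Suc n))) x" using C(2) xK by blast
    have "n \<le> n0" unfolding n0_def using C(1) n(1) by simp
    then have "inverse (real (Suc n0)) \<le> inverse (real (Suc n))" by (simp add: le_imp_inverse_le)
    then show ?thesis using good_mono[OF n(2)] by blast
  qed
  then show ?thesis unfolding K_def by (intro exI[of _ "inverse (real (Suc n0))"]) auto
qed


lemma cp_union: "cube_partition P Q \<Longrightarrow> \<Union>P = Q" by (simp add: cube_partition_def)
lemma cp_cube: "cube_partition P Q \<Longrightarrow> R \<in> P \<Longrightarrow> is_cube R" by (simp add: cube_partition_def)

theorem claim3p4:
  fixes Q :: "'k::finite \<Rightarrow> (real^'d) set"
  assumes "2 \<le> CARD('k)" and "CARD('k) \<le> CARD('d) + 1"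
    and "\<forall>l. is_cube (Q l)"
    and "transversal Q"
  shows "\<exists>P :: 'k \<Rightarrow> (real^'d) set set. (\<forall>l. cube_partition (P l) (Q l)) \<and>
           (\<forall>Qt. (\<forall>l. Qt l \<in> P l) \<longrightarrow> weakly_transversal Qt)"
proof -
  obtain \<delta> where \<delta>: "\<delta> > 0" "\<forall>x :: (real^'d)^'k. (\<forall>l. x$l \<in> Q l) \<longrightarrow> good \<delta> x"
    using uniform_good[OF assms(3,4)] by blast
  define h where "h = \<delta> / 3"
  have hpos: "h > 0" unfolding h_def using \<delta>(1) by simp
  have "\<forall>l. \<exists>P. cube_partition P (Q l) \<and> (\<forall>R\<in>P. \<forall>x\<in>R. \<forall>y\<in>R. \<forall>i. \<bar>x$i - y$i\<bar> \<le> h)"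
  proof
    fix l show "\<exists>P. cube_partition P (Q l) \<and> (\<forall>R\<in>P. \<forall>x\<in>R. \<forall>y\<in>R. \<forall>i. \<bar>x$i - y$i\<bar> \<le> h)"
      using grid[OF spec[OF assms(3), of l] hpos] .
  qed
  then have "\<exists>P. \<forall>l. cube_partition (P l) (Q l) \<and> (\<forall>R\<in>P l. \<forall>x\<in>R. \<forall>y\<in>R. \<forall>i. \<bar>x$i - y$i\<bar> \<le> h)"
    by (rule choice)
  then obtain P where P0: "\<forall>l. cube_partition (P l) (Q l) \<and> (\<forall>R\<in>P l. \<forall>x\<in>R. \<forall>y\<in>R. \<forall>i. \<bar>x$i - y$i\<bar> \<le> h)"
    by blast
  have P1: "cube_partition (P l) (Q l)" for l using P0 by blast
  have P2: "\<forall>R\<in>P l. \<forall>x\<in>R. \<forall>y\<in>R. \<forall>i. \<bar>x$i - y$i\<bar> \<le> h" for l using P0 by blast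
  note P = P1 P2
  show ?thesis
  proof (intro exI[of _ P] conjI allI impI)
    show "cube_partition (P l) (Q l)" for l by (rule P(1))
  next
    fix Qt assume Qt: "\<forall>l. Qt l \<in> P l"
    have ne: "Qt l \<noteq> {}" for l
    proof -
      have "is_cube (Qt l)" using cp_cube[OF P(1)[of l]] spec[OF Qt, of l] by blast
      then obtain a b where "\<forall>i. a$i < b$i" "Qt l = cbox a b" unfolding is_cube_def by blast
      then have "a \<in> Qt l" by (simp add: mem_box_cart less_imp_le)
      then show ?thesis by blast
    qed
    have sub: "Qt l \<subseteq> Q l" for l using Union_upper[OF spec[OF Qt, of l]] cp_union[OF P(1)[of l]] by simp
    define p where "p l = (SOME x. x \<in> Qt l)" for l
    have pin: "p l \<in> Qt l" for l unfolding p_def using ne[of l] by (simp add: some_in_eq)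
    have "\<forall>l. (\<chi> l. p l) $ l \<in> Q l" using pin sub by auto
    then have "good \<delta> (\<chi> l. p l)" using \<delta>(2) by blast
    then have gd: "\<forall>j. \<exists>\<sigma>. inj_on \<sigma> (UNIV - {j}) \<and> (\<forall>l\<in>UNIV - {j}. \<delta> < \<bar>p l $ \<sigma> l - p j $ \<sigma> l\<bar>)"
      unfolding good_def by simp
    have cl: "closure (coord_proj i (Qt m)) \<subseteq> cball (p m $ i) h" for i m
    proof (rule closure_minimal)
      show "coord_proj i (Qt m) \<subseteq> cball (p m $ i) h"
      proof
        fix z assume "z \<in> coord_proj i (Qt m)"
        then obtain y where y: "y \<in> Qt m" "z = y $ i" unfolding coord_proj_def by blast
        have "\<bar>p m $ i - y $ i\<bar> \<le> h" using P(2)[of m] Qt pin[of m] y(1) by blast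
        then show "z \<in> cball (p m $ i) h" using y(2) by (simp add: dist_real_def)
      qed
    qed simp
    show "weakly_transversal Qt" unfolding weakly_transversal_def weakly_transversal_pivot_def
    proof
      fix j
      obtain \<sigma> where \<sigma>: "inj_on \<sigma> (UNIV - {j})" "\<forall>l\<in>UNIV - {j}. \<delta> < \<bar>p l $ \<sigma> l - p j $ \<sigma> l\<bar>"
        using gd by blast
      show "\<exists>\<sigma>. inj_on \<sigma> (UNIV - {j}) \<and> (\<forall>l. l \<noteq> j \<longrightarrow>
              closure (coord_proj (\<sigma> l) (Qt j)) \<inter> closure (coord_proj (\<sigma> l) (Qt l)) = {})"
      proof (intro exI[of _ \<sigma>] conjI allI impI)
        show "inj_on \<sigma> (UNIV - {j})" by (rule \<sigma>(1))
        fix l assume lj: "l \<noteq> j"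
        have big: "\<delta> < \<bar>p l $ \<sigma> l - p j $ \<sigma> l\<bar>" using \<sigma>(2) lj by blast
        show "closure (coord_proj (\<sigma> l) (Qt j)) \<inter> closure (coord_proj (\<sigma> l) (Qt l)) = {}"
        proof (rule ccontr)
          assume "closure (coord_proj (\<sigma> l) (Qt j)) \<inter> closure (coord_proj (\<sigma> l) (Qt l)) \<noteq> {}"
          then obtain z where "z \<in> closure (coord_proj (\<sigma> l) (Qt j))" "z \<in> closure (coord_proj (\<sigma> l) (Qt l))"
            by blast
          then have "z \<in> cball (p j $ \<sigma> l) h" "z \<in> cball (p l $ \<sigma> l) h" using cl by blast+
          then have "\<bar>p j $ \<sigma> l - z\<bar> \<le> h" "\<bar>p l $ \<sigma> l - z\<bar> \<le> h" by (simp_all add: dist_real_def)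
          then show False using big unfolding h_def by linarith
        qed
      qed
    qed
  qed
qed

end
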